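(* For every elliptic modulus $\kappa\in[0,1)$ and every $n\in\mathbb{Z}$, the equation $$(-1)^n\kappa'\big(\mathrm{sc}_\kappa(x)+\mathrm{nc}_\kappa(x)\big)-2\,\mathrm{dc}_\kappa(x)=0$$ has no solution $x$ with $-K(\kappa)<x<K(\kappa)$.
   Context: $\kappa'=\sqrt{1-\kappa^2}$; $\mathrm{sn}_\kappa,\mathrm{cn}_\kappa,\mathrm{dn}_\kappa$ are the Jacobi elliptic functions with modulus $\kappa$, and Glaisher's notation is used: $\mathrm{sc}=\mathrm{sn}/\mathrm{cn}$, $\mathrm{nc}=1/\mathrm{cn}$, $\mathrm{dc}=\mathrm{dn}/\mathrm{cn}$. $K(\kappa)=\int_0^{\pi/2}(1-\kappa^2\sin^2\theta)^{-1/2}d\theta$ is the complete elliptic integral of the first kind. *)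

theory Defs
  imports "HOL-Analysis.Analysis"
begin

definition ellF :: "real \<Rightarrow> real \<Rightarrow> real" where
  "ellF k phi = (if 0 \<le> phi
      then integral {0..phi} (\<lambda>t. 1 / sqrt (1 - k\<^sup>2 * (sin t)\<^sup>2))
      else - integral {phi..0} (\<lambda>t. 1 / sqrt (1 - k\<^sup>2 * (sin t)\<^sup>2)))"

definition ellK :: "real \<Rightarrow> real" where
  "ellK k = integral {0..pi/2} (\<lambda>t. 1 / sqrt (1 - k\<^sup>2 * (sin t)\<^sup>2))"

definition jam :: "real \<Rightarrow> real \<Rightarrow> real" where
  "jam k u = (THE phi. ellF k phi = u)"

definition jsn :: "real \<Rightarrow> real \<Rightarrow> real" where
  "jsn k u = sin (jam k u)"

definition jcn :: "real \<Rightarrow> real \<Rightarrow> real" where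
  "jcn k u = cos (jam k u)"

definition jdn :: "real \<Rightarrow> real \<Rightarrow> real" where
  "jdn k u = sqrt (1 - k\<^sup>2 * (jsn k u)\<^sup>2)"

definition jsc :: "real \<Rightarrow> real \<Rightarrow> real" where
  "jsc k u = jsn k u / jcn k u"

definition jnc :: "real \<Rightarrow> real \<Rightarrow> real" where
  "jnc k u = 1 / jcn k u"

definition jdc :: "real \<Rightarrow> real \<Rightarrow> real" where
  "jdc k u = jdn k u / jcn k u"

end

theory Submission
  imports Defs
begin

definition fk :: "real \<Rightarrow> real \<Rightarrow> real" where
  "fk k t = 1 / sqrt (1 - k\<^sup>2 * (sin t)\<^sup>2)"

lemma k2_lt1: fixes k :: real assumes "0 \<le> k" "k < 1" shows "k\<^sup>2 < 1"
  proof -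
  have "k*k \<le> k" using assms mult_left_le[of k k] by simp
  then show ?thesis using assms by (simp add: power2_eq_square)
qed

lemma fk_pos_rad:
  fixes k t :: real
  assumes "0 \<le> k" "k < 1"
  shows "1 - k\<^sup>2 \<le> 1 - k\<^sup>2 * (sin t)\<^sup>2" "0 < 1 - k\<^sup>2"
    "1 - k\<^sup>2 * (sin t)\<^sup>2 \<le> 1"
proof -
  have s: "(sin t)\<^sup>2 \<le> 1" using abs_sin_le_one[of t] by (simp add: abs_square_le_1)
  show "1 - k\<^sup>2 \<le> 1 - k\<^sup>2 * (sin t)\<^sup>2"
    using s mult_left_mono[OF s, of "k^2"] by simp
  show "0 < 1 - k\<^sup>2" using k2_lt1[OF assms] by simp
  show "1 - k\<^sup>2 * (sin t)\<^sup>2 \<le> 1" by simp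
qed

lemma fk_bounds:
  assumes "0 \<le> k" "k < 1"
  shows "1 \<le> fk k t" "fk k t \<le> 1 / sqrt (1 - k\<^sup>2)"
proof -
  have h: "1 - k\<^sup>2 \<le> 1 - k\<^sup>2 * (sin t)\<^sup>2" "0 < 1 - k\<^sup>2" "1 - k\<^sup>2 * (sin t)\<^sup>2 \<le> 1"
    using fk_pos_rad[OF assms] by auto
  have p: "0 < 1 - k\<^sup>2 * (sin t)\<^sup>2" using h by linarith
  have "sqrt (1 - k\<^sup>2 * (sin t)\<^sup>2) \<le> 1" using h(3) by simp
  then show "1 \<le> fk k t" unfolding fk_def using p by (simp add: field_simps)
  have "sqrt (1 - k\<^sup>2) \<le> sqrt (1 - k\<^sup>2 * (sin t)\<^sup>2)" using h(1) by simp
  then show "fk k t \<le> 1 / sqrt (1 - k\<^sup>2)" unfolding fk_def using h(2)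
    by (simp add: frac_le)
qed

lemma fk_cont:
  assumes "0 \<le> k" "k < 1"
  shows "continuous_on S (fk k)"
proof -
  have "\<And>t. 0 < 1 - k\<^sup>2 * (sin t)\<^sup>2" using fk_pos_rad[OF assms] by (meson less_le_trans)
  then have "\<And>t. 1 - k\<^sup>2 * (sin t)\<^sup>2 \<noteq> 0" by (metis less_irrefl)
  then show ?thesis unfolding fk_def
    by (intro continuous_intros) auto
qed

lemma fk_int:
  assumes "0 \<le> k" "k < 1"
  shows "fk k integrable_on {a..b}"
  by (rule integrable_continuous_interval[OF fk_cont[OF assms]])

lemma ellF_fk: "ellF k phi = (if 0 \<le> phi then integral {0..phi} (fk k) else - integral {phi..0} (fk k))"
  unfolding ellF_def fk_def by simp

lemma ellF_diff:
  assumes "0 \<le> k" "k < 1" "a \<le> b"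
  shows "ellF k b - ellF k a = integral {a..b} (fk k)"
proof -
  note c = Henstock_Kurzweil_Integration.integral_combine[OF _ _ fk_int[OF assms(1,2)]]
  consider "0 \<le> a" | "b < 0" | "a < 0" "0 \<le> b" by linarith
  then show ?thesis
  proof cases
    case 1
    then show ?thesis using c[of 0 a b] assms by (simp add: ellF_fk)
  next
    case 2
    then show ?thesis using c[of a b 0] assms by (simp add: ellF_fk)
  next
    case 3
    then show ?thesis using c[of a 0 b] assms by (simp add: ellF_fk)
  qed
qed

lemma ellF_bounds:
  assumes "0 \<le> k" "k < 1" "a \<le> b"
  shows "b - a \<le> ellF k b - ellF k a" "ellF k b - ellF k a \<le> (1 / sqrt (1 - k\<^sup>2)) * (b - a)"
proof -
  have i1: "integral {a..b} (\<lambda>_. 1::real) \<le> integral {a..b} (fk k)"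
    by (rule integral_le) (auto simp: fk_int[OF assms(1,2)] fk_bounds[OF assms(1,2)])
  have i2: "integral {a..b} (fk k) \<le> integral {a..b} (\<lambda>_. 1 / sqrt (1 - k\<^sup>2))"
    by (rule integral_le) (auto simp: fk_int[OF assms(1,2)] fk_bounds[OF assms(1,2)])
  show "b - a \<le> ellF k b - ellF k a" using i1 assms ellF_diff[OF assms] by simp
  show "ellF k b - ellF k a \<le> (1 / sqrt (1 - k\<^sup>2)) * (b - a)" using i2 assms ellF_diff[OF assms] fk_pos_rad(2)[OF assms(1,2)] by (simp add: mult.commute)
qed

lemma ellF_cont:
  assumes "0 \<le> k" "k < 1"
  shows "continuous_on S (ellF k)"
proof (rule lipschitz_on_continuous_on[where L = "1 / sqrt (1 - k\<^sup>2)"], rule lipschitz_onI)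
  show "0 \<le> 1 / sqrt (1 - k\<^sup>2)" using fk_pos_rad(2)[OF assms] by simp
  fix x y assume "x \<in> S" "y \<in> S"
  show "dist (ellF k x) (ellF k y) \<le> 1 / sqrt (1 - k\<^sup>2) * dist x y"
  proof (cases "x \<le> y")
    case True
    then show ?thesis using ellF_bounds[OF assms True] by (simp add: dist_real_def abs_if)
  next
    case False
    then have yx: "y \<le> x" by simp
    then show ?thesis using ellF_bounds[OF assms yx] by (simp add: dist_real_def abs_if)
  qed
qed

lemma ellF_mono:
  assumes "0 \<le> k" "k < 1" "a < b"
  shows "ellF k a < ellF k b"
  using ellF_bounds(1)[OF assms(1,2), of a b] assms by simp

lemma ellF_pi2: "ellF k (pi/2) = ellK k"
  unfolding ellF_def ellK_def by simp

lemma ellF_mpi2: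
  assumes "0 \<le> k" "k < 1"
  shows "ellF k (-(pi/2)) = - ellK k"
proof -
  have "(fk k has_integral integral {0..pi/2} (fk k)) {0..pi/2}"
    using fk_int[OF assms] by blast
  then have "((\<lambda>x. fk k (- x)) has_integral integral {0..pi/2} (fk k)) {-(pi/2)..-0}"
    using has_integral_reflect_real by blast
  moreover have "(\<lambda>x. fk k (- x)) = fk k" by (auto simp: fk_def)
  ultimately have "integral {-(pi/2)..0} (fk k) = integral {0..pi/2} (fk k)"
    by (simp add: integral_unique)
  moreover have "\<not> 0 \<le> -(pi/2)" using pi_gt_zero by linarith
  ultimately show ?thesis unfolding ellF_fk ellK_def fk_def[symmetric] by simp
qed

lemma jam_prop:
  assumes "0 \<le> k" "k < 1" "- ellK k < x" "x < ellK k"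
  shows "-(pi/2) < jam k x" "jam k x < pi/2"
proof -
  obtain p where p: "-(pi/2) \<le> p" "p \<le> pi/2" "ellF k p = x"
    using IVT'[of "ellF k" "-(pi/2)" x "pi/2"] ellF_cont[OF assms(1,2)] assms
      ellF_pi2[of k] ellF_mpi2[OF assms(1,2)] by force
  have u: "\<And>q. ellF k q = x \<Longrightarrow> q = p"
    using ellF_mono[OF assms(1,2)] p(3) by (metis linorder_neqE_linordered_idom less_irrefl)
  have "jam k x = p" unfolding jam_def using p(3) u by (rule the_equality)
  moreover have "p \<noteq> pi/2" "p \<noteq> -(pi/2)" using p(3) assms ellF_pi2[of k] ellF_mpi2[OF assms(1,2)] by (metis less_irrefl)+
  ultimately show "-(pi/2) < jam k x" "jam k x < pi/2" using p by auto
qed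

theorem mainTheorem12:
  fixes \<kappa> :: real and n :: int
  assumes "0 \<le> \<kappa>" and "\<kappa> < 1"
  shows "\<not> (\<exists>x. - ellK \<kappa> < x \<and> x < ellK \<kappa> \<and>
           (-1::real) powi n * sqrt (1 - \<kappa>\<^sup>2) * (jsc \<kappa> x + jnc \<kappa> x) - 2 * jdc \<kappa> x = 0)"
proof
  assume "\<exists>x. - ellK \<kappa> < x \<and> x < ellK \<kappa> \<and>
           (-1::real) powi n * sqrt (1 - \<kappa>\<^sup>2) * (jsc \<kappa> x + jnc \<kappa> x) - 2 * jdc \<kappa> x = 0"
  then obtain x where x: "- ellK \<kappa> < x" "x < ellK \<kappa>"
    and eq: "(-1::real) powi n * sqrt (1 - \<kappa>\<^sup>2) * (jsc \<kappa> x + jnc \<kappa> x) - 2 * jdc \<kappa> x = 0" by blast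
  define p where "p = jam \<kappa> x"
  have pb: "-(pi/2) < p" "p < pi/2" using jam_prop[OF assms x] p_def by auto
  have c: "cos p > 0" using pb by (intro cos_gt_zero_pi) auto
  define s where "s = sin p"
  define c where "c = cos p"
  define kp where "kp = sqrt (1 - \<kappa>\<^sup>2)"
  define \<sigma> where "\<sigma> = (-1::real) powi n"
  have sa: "\<bar>\<sigma>\<bar> = 1" unfolding \<sigma>_def by (simp add: power_int_abs)
  have cs: "s\<^sup>2 + c\<^sup>2 = 1" unfolding s_def c_def by simp
  have c0: "c > 0" using c c_def by simp
  have s2: "s\<^sup>2 < 1" using cs c0 by (smt (verit) zero_less_power)
  have s1: "s < 1" "-1 < s" using s2 abs_square_less_1[of s] by auto
  have kp0: "kp > 0" unfolding kp_def using fk_pos_rad(2)[OF assms] by simp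
  define d where "d = sqrt (1 - \<kappa>\<^sup>2 * s\<^sup>2)"
  have kpd: "kp \<le> d" unfolding kp_def d_def using fk_pos_rad(1)[OF assms, of p] s_def by simp
  have js: "jsc \<kappa> x = s / c" "jnc \<kappa> x = 1 / c" "jdc \<kappa> x = d / c"
    unfolding jsc_def jnc_def jdc_def jdn_def jsn_def jcn_def s_def c_def d_def p_def by simp_all
  have "c * (\<sigma> * kp * (s + 1)) = c * (2 * d)"
    using eq c0 unfolding js \<sigma>_def[symmetric] kp_def[symmetric] by (simp add: field_simps)
  then have eq2: "\<sigma> * kp * (s + 1) = 2 * d" using c0 by simp
  have "\<sigma> * kp * (s + 1) \<le> \<bar>\<sigma> * kp * (s + 1)\<bar>" by simp
  also have "\<dots> = kp * (s + 1)" using sa kp0 s1 by (simp add: abs_mult)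
  also have "\<dots> < kp * 2" using kp0 s1 by simp
  also have "\<dots> \<le> 2 * d" using kpd by simp
  finally show False using eq2 by simp
qed

end
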